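(* Let $G$ be a profinite-$C$ group and let $A$ be an abelian closed normal subgroup of $G$. Then: (i) For every closed subgroup $B$ of $A$, we have $A=B\times L$ for some closed normal subgroup $L$ of $G$. (ii) If $A$ is a minimal closed normal subgroup of $G$, then $A$ has prime order. (iii) If $A\ne 1$ and $B$ is maximal among the proper open subgroups of $A$ that are normal in $G$, then $A/B$ is isomorphic as a $G$-module (with $G$ acting by conjugation) to a minimal closed normal subgroup of $G$ contained in $A$. In particular, $A$ contains minimal closed normal subgroups of $G$.
   Context: A permutable complement of a subgroup $H$ of a group $G$ is a subgroup $K$ with $G=HK$ and $H\cap K=1$. A profinite group $G$ is a profinite-$C$ group if every closed subgroup of $G$ has a closed permutable complement in $G$. A minimal closed normal subgroup of $G$ is a nontrivial closed normal subgroup of $G$ containing no nontrivial closed normal subgroup of $G$ other than itself. *)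

theory Defs
  imports "HOL-Analysis.Analysis" "HOL-Algebra.Coset"
begin

definition topological_group :: "('a, 'b) monoid_scheme \<Rightarrow> 'a topology \<Rightarrow> bool" where
  "topological_group G T \<longleftrightarrow> group G \<and> topspace T = carrier G \<and>
     continuous_map (prod_topology T T) T (\<lambda>p. fst p \<otimes>\<^bsub>G\<^esub> snd p) \<and>
     continuous_map T T (\<lambda>x. inv\<^bsub>G\<^esub> x)"

definition profinite_group :: "('a, 'b) monoid_scheme \<Rightarrow> 'a topology \<Rightarrow> bool" where
  "profinite_group G T \<longleftrightarrow> topological_group G T \<and> compact_space T \<and> Hausdorff_space T \<and>
     (\<forall>x \<in> topspace T. \<forall>y. connected_component_of T x y \<longrightarrow> x = y)"

definition closed_subgroup :: "('a, 'b) monoid_scheme \<Rightarrow> 'a topology \<Rightarrow> 'a set \<Rightarrow> bool" where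
  "closed_subgroup G T H \<longleftrightarrow> subgroup H G \<and> closedin T H"

definition permutable_complement :: "('a, 'b) monoid_scheme \<Rightarrow> 'a set \<Rightarrow> 'a set \<Rightarrow> bool" where
  "permutable_complement G H K \<longleftrightarrow> subgroup K G \<and> H <#>\<^bsub>G\<^esub> K = carrier G \<and> H \<inter> K = {\<one>\<^bsub>G\<^esub>}"

definition profinite_C_group :: "('a, 'b) monoid_scheme \<Rightarrow> 'a topology \<Rightarrow> bool" where
  "profinite_C_group G T \<longleftrightarrow> profinite_group G T \<and>
     (\<forall>H. closed_subgroup G T H \<longrightarrow> (\<exists>K. closed_subgroup G T K \<and> permutable_complement G H K))"

definition minimal_closed_normal :: "('a, 'b) monoid_scheme \<Rightarrow> 'a topology \<Rightarrow> 'a set \<Rightarrow> bool" where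
  "minimal_closed_normal G T N \<longleftrightarrow> N \<lhd> G \<and> closedin T N \<and> N \<noteq> {\<one>\<^bsub>G\<^esub>} \<and>
     (\<forall>M. M \<lhd> G \<and> closedin T M \<and> M \<subseteq> N \<and> M \<noteq> {\<one>\<^bsub>G\<^esub>} \<longrightarrow> M = N)"

end

theory Submission
  imports Defs "HOL-Algebra.Multiplicative_Group"
begin

lemma (in group) gcancel1: "x \<in> carrier G \<Longrightarrow> y \<in> carrier G \<Longrightarrow> x \<otimes> (inv x \<otimes> y) = y"
  by (simp add: m_assoc[symmetric])

lemma (in group) gcancel2: "x \<in> carrier G \<Longrightarrow> y \<in> carrier G \<Longrightarrow> inv x \<otimes> (x \<otimes> y) = y"
  by (simp add: m_assoc[symmetric])

lemma tg_group: "topological_group G T \<Longrightarrow> group G"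
  by (simp add: topological_group_def)

lemma tg_top: "topological_group G T \<Longrightarrow> topspace T = carrier G"
  by (simp add: topological_group_def)

lemma tg_cont_mult:
  assumes "topological_group G T" "continuous_map X T f" "continuous_map X T g"
  shows "continuous_map X T (\<lambda>x. f x \<otimes>\<^bsub>G\<^esub> g x)"
proof -
  have m: "continuous_map (prod_topology T T) T (\<lambda>p. fst p \<otimes>\<^bsub>G\<^esub> snd p)"
    using assms(1) by (simp add: topological_group_def)
  have "continuous_map X (prod_topology T T) (\<lambda>x. (f x, g x))"
    using assms by (simp add: continuous_map_pairedI)
  from continuous_map_compose[OF this m] show ?thesis by (simp add: o_def)
qed

lemma tg_cont_inv:
  assumes "topological_group G T" "continuous_map X T f"
  shows "continuous_map X T (\<lambda>x. inv\<^bsub>G\<^esub> f x)"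
proof -
  have m: "continuous_map T T (\<lambda>x. inv\<^bsub>G\<^esub> x)"
    using assms(1) by (simp add: topological_group_def)
  from continuous_map_compose[OF assms(2) m] show ?thesis by (simp add: o_def)
qed

lemma tg_cont_const:
  assumes "topological_group G T" "g \<in> carrier G"
  shows "continuous_map X T (\<lambda>x. g)"
  using assms tg_top by (metis continuous_map_const)

lemma tg_open_preimage:
  assumes "topological_group G T" "continuous_map T T h" "openin T Q"
  shows "openin T {x \<in> carrier G. h x \<in> Q}"
  using openin_continuous_map_preimage[OF assms(2,3)] tg_top[OF assms(1)] by simp

lemma (in group) tg_lcoset_open:
  assumes tg: "topological_group G T" and g: "g \<in> carrier G" and Op: "openin T Q"
  shows "openin T (g <#\<^bsub>G\<^esub> Q)"
proof -
  have Oc: "Q \<subseteq> carrier G" using openin_subset[OF Op] tg_top[OF tg] by simp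
  have c: "continuous_map T T (\<lambda>x. inv g \<otimes> x)"
    by (intro tg_cont_mult[OF tg] tg_cont_const[OF tg] continuous_map_id[unfolded id_def] inv_closed g)
  have "g <# Q = {x \<in> carrier G. inv g \<otimes> x \<in> Q}"
  proof safe
    fix x assume "x \<in> g <# Q"
    then obtain o' where "o' \<in> Q" "x = g \<otimes> o'" unfolding l_coset_def by auto
    then show "x \<in> carrier G" "inv g \<otimes> x \<in> Q" using Oc g by (auto simp: m_assoc[symmetric])
  next
    fix x assume "x \<in> carrier G" "inv g \<otimes> x \<in> Q"
    then have "x = g \<otimes> (inv g \<otimes> x)" using g by (simp add: m_assoc[symmetric])
    then show "x \<in> g <# Q" unfolding l_coset_def using \<open>inv g \<otimes> x \<in> Q\<close> by blast
  qed
  then show ?thesis using tg_open_preimage[OF tg c Op] by simp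
qed

lemma (in group) tg_rcoset_open:
  assumes tg: "topological_group G T" and g: "g \<in> carrier G" and Op: "openin T Q"
  shows "openin T (Q #>\<^bsub>G\<^esub> g)"
proof -
  have Oc: "Q \<subseteq> carrier G" using openin_subset[OF Op] tg_top[OF tg] by simp
  have c: "continuous_map T T (\<lambda>x. x \<otimes> inv g)"
    by (intro tg_cont_mult[OF tg] tg_cont_const[OF tg] continuous_map_id[unfolded id_def] inv_closed g)
  have "Q #> g = {x \<in> carrier G. x \<otimes> inv g \<in> Q}"
  proof safe
    fix x assume "x \<in> Q #> g"
    then obtain o' where "o' \<in> Q" "x = o' \<otimes> g" unfolding r_coset_def by auto
    then show "x \<in> carrier G" "x \<otimes> inv g \<in> Q" using Oc g by (auto simp: m_assoc)
  next
    fix x assume "x \<in> carrier G" "x \<otimes> inv g \<in> Q"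
    then have "x = (x \<otimes> inv g) \<otimes> g" using g by (simp add: m_assoc gcancel1 gcancel2)
    then show "x \<in> Q #> g" unfolding r_coset_def using \<open>x \<otimes> inv g \<in> Q\<close> by blast
  qed
  then show ?thesis using tg_open_preimage[OF tg c Op] by simp
qed


lemma (in group) clopen_sep:
  assumes pg: "profinite_group G T" and x: "x \<in> carrier G" "x \<noteq> \<one>"
  shows "\<exists>U. closedin T U \<and> openin T U \<and> \<one> \<in> U \<and> x \<notin> U"
proof -
  have tg: "topological_group G T" and cs: "compact_space T" and hs: "Hausdorff_space T"
    and td: "\<forall>a \<in> topspace T. \<forall>b. connected_component_of T a b \<longrightarrow> a = b"
    using pg unfolding profinite_group_def by simp_all
  have top: "topspace T = carrier G" using tg_top[OF tg] .
  have one: "\<one> \<in> topspace T" using top by simp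
  have xt: "x \<in> topspace T" using top x by simp
  have nc: "\<not> connected_component_of T \<one> x"
  proof
    assume "connected_component_of T \<one> x"
    then have "\<one> = x" using td one by blast
    then show False using x(2) by simp
  qed
  have qe: "quasi_component_of T \<one> = connected_component_of T \<one>"
    by (rule quasi_eq_connected_component_of) (simp add: cs hs)
  have "\<not> quasi_component_of T \<one> x" using nc qe by simp
  then have "\<not> (\<forall>U. closedin T U \<and> openin T U \<longrightarrow> (\<one> \<in> U \<longleftrightarrow> x \<in> U))"
    using one xt unfolding quasi_component_of_def by simp
  then obtain U where U: "closedin T U" "openin T U" "\<not> (\<one> \<in> U \<longleftrightarrow> x \<in> U)"
    by blast
  show ?thesis
  proof (cases "\<one> \<in> U")
    case True
    then have "x \<notin> U" using U(3) by simp
    then show ?thesis using U(1,2) True by blast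
  next
    case False
    then have xU: "x \<in> U" using U(3) by simp
    have "closedin T (topspace T - U)" using U(2) by (rule closedin_diff[OF closedin_topspace])
    moreover have "openin T (topspace T - U)" using U(1) by (rule openin_diff[OF openin_topspace])
    moreover have "\<one> \<in> topspace T - U" using one False by simp
    moreover have "x \<notin> topspace T - U" using xU by simp
    ultimately show ?thesis by blast
  qed
qed

lemma (in group) clopen_normal:
  assumes tg: "topological_group G T" and cs: "compact_space T"
    and U: "closedin T U" "openin T U" "\<one> \<in> U"
  shows "\<exists>H. H \<lhd> G \<and> openin T H \<and> H \<subseteq> U"
proof -
  have top: "topspace T = carrier G" using tg_top[OF tg] .
  have Uc: "U \<subseteq> carrier G" using openin_subset[OF U(2)] top by simp
  have cfst: "continuous_map (prod_topology T T) T fst" by (rule continuous_map_fst)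
  have csnd: "continuous_map (prod_topology T T) T snd" by (rule continuous_map_snd)
  have idc: "continuous_map T T (\<lambda>x. x)" using continuous_map_id[unfolded id_def] .
  define W1 where "W1 = {p \<in> topspace (prod_topology T T). fst p \<otimes> snd p \<in> U}"
  have "openin (prod_topology T T) W1"
    unfolding W1_def by (rule openin_continuous_map_preimage[OF tg_cont_mult[OF tg cfst csnd] U(2)])
  moreover have "compactin T U" using closedin_compact_space[OF cs U(1)] .
  moreover have "\<one> \<in> topspace T" using top by simp
  moreover have "U \<times> {\<one>} \<subseteq> W1" using Uc top by (auto simp: W1_def)
  ultimately obtain U' V1 where V1: "openin T V1" "\<one> \<in> V1" "U' \<times> V1 \<subseteq> W1" "U \<subseteq> U'"
    using tube_lemma_left by metis
  have V1c: "V1 \<subseteq> carrier G" using openin_subset[OF V1(1)] top by simp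
  have UV1: "u \<otimes> v \<in> U" if "u \<in> U" "v \<in> V1" for u v
  proof -
    have "(u, v) \<in> W1" using V1(3,4) that by blast
    then show ?thesis by (simp add: W1_def)
  qed
  define W2 where "W2 = {p \<in> topspace (prod_topology T T). fst p \<otimes> snd p \<otimes> inv (fst p) \<in> V1}"
  have "continuous_map (prod_topology T T) T (\<lambda>p. fst p \<otimes> snd p \<otimes> inv (fst p))"
    by (intro tg_cont_mult[OF tg] tg_cont_inv[OF tg] cfst csnd)
  then have "openin (prod_topology T T) W2"
    unfolding W2_def by (rule openin_continuous_map_preimage[OF _ V1(1)])
  moreover have "compactin T (topspace T)" using cs by (simp add: compact_space_def)
  moreover have "\<one> \<in> topspace T" using top by simp
  moreover have "topspace T \<times> {\<one>} \<subseteq> W2" using top V1 by (auto simp: W2_def)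
  ultimately obtain G' V2 where V2: "openin T V2" "\<one> \<in> V2" "G' \<times> V2 \<subseteq> W2" "topspace T \<subseteq> G'"
    using tube_lemma_left by metis
  have V2c: "V2 \<subseteq> carrier G" using openin_subset[OF V2(1)] top by simp
  have conjV2: "g \<otimes> v \<otimes> inv g \<in> V1" if "g \<in> carrier G" "v \<in> V2" for g v
  proof -
    have "(g, v) \<in> W2" using V2(3,4) that top by blast
    then show ?thesis by (simp add: W2_def)
  qed
  define V3 where "V3 = V2 \<inter> {v \<in> carrier G. inv v \<in> V2}"
  have V3o: "openin T V3" unfolding V3_def
    by (intro openin_Int V2(1) tg_open_preimage[OF tg tg_cont_inv[OF tg idc] V2(1)])
  define W where "W = {w \<in> carrier G. \<exists>g\<in>carrier G. inv g \<otimes> w \<otimes> g \<in> V3}"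
  have Wc: "W \<subseteq> carrier G" by (auto simp: W_def)
  have "W = (\<Union>g\<in>carrier G. {w \<in> carrier G. inv g \<otimes> w \<otimes> g \<in> V3})" by (auto simp: W_def)
  moreover have "\<And>g. g \<in> carrier G \<Longrightarrow> openin T {w \<in> carrier G. inv g \<otimes> w \<otimes> g \<in> V3}"
    by (intro tg_open_preimage[OF tg _ V3o] tg_cont_mult[OF tg] tg_cont_const[OF tg] idc inv_closed)
  ultimately have Wo: "openin T W" by (metis (no_types, lifting) imageE openin_Union)
  have W1: "\<one> \<in> W"
  proof -
    have "inv \<one> \<otimes> \<one> \<otimes> \<one> \<in> V3" using V2(2) by (simp add: V3_def)
    then show ?thesis unfolding W_def by blast
  qed
  have WV1: "w \<in> V1" if "w \<in> W" for w
  proof -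
    have "w \<in> carrier G \<and> (\<exists>g\<in>carrier G. inv g \<otimes> w \<otimes> g \<in> V3)" using that by (simp add: W_def)
    then obtain g where g: "g \<in> carrier G" "w \<in> carrier G" "inv g \<otimes> w \<otimes> g \<in> V3" by blast
    then have g3: "inv g \<otimes> w \<otimes> g \<in> V2" by (simp add: V3_def)
    have "g \<otimes> (inv g \<otimes> w \<otimes> g) \<otimes> inv g = w" using g by (simp add: m_assoc gcancel1 gcancel2)
    then show "w \<in> V1" using conjV2[OF g(1) g3] by simp
  qed
  have Wconj: "k \<otimes> w \<otimes> inv k \<in> W" if k: "k \<in> carrier G" and "w \<in> W" for k w
  proof -
    have "w \<in> carrier G \<and> (\<exists>g\<in>carrier G. inv g \<otimes> w \<otimes> g \<in> V3)" using that by (simp add: W_def)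
    then obtain g where g: "g \<in> carrier G" "w \<in> carrier G" "inv g \<otimes> w \<otimes> g \<in> V3" by blast
    have "inv (k \<otimes> g) \<otimes> (k \<otimes> w \<otimes> inv k) \<otimes> (k \<otimes> g) = inv g \<otimes> w \<otimes> g"
      using g k by (simp add: m_assoc inv_mult_group gcancel1 gcancel2)
    then have "inv (k \<otimes> g) \<otimes> (k \<otimes> w \<otimes> inv k) \<otimes> (k \<otimes> g) \<in> V3" using g by simp
    moreover have "k \<otimes> g \<in> carrier G" "k \<otimes> w \<otimes> inv k \<in> carrier G" using g k by auto
    ultimately show ?thesis unfolding W_def by blast
  qed
  have Winv: "inv w \<in> W" if "w \<in> W" for w
  proof -
    have "w \<in> carrier G \<and> (\<exists>g\<in>carrier G. inv g \<otimes> w \<otimes> g \<in> V3)" using that by (simp add: W_def)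
    then obtain g where g: "g \<in> carrier G" "w \<in> carrier G" "inv g \<otimes> w \<otimes> g \<in> V3" by blast
    have "inv g \<otimes> inv w \<otimes> g = inv (inv g \<otimes> w \<otimes> g)"
      using g by (simp add: m_assoc inv_mult_group gcancel1 gcancel2)
    moreover have "inv g \<otimes> w \<otimes> g \<in> carrier G" using g by simp
    ultimately have "inv g \<otimes> inv w \<otimes> g \<in> V3" using g(3) unfolding V3_def by simp
    moreover have "inv w \<in> carrier G" using g by simp
    ultimately show "inv w \<in> W" using g(1) unfolding W_def by blast
  qed
  define H where "H = generate G W"
  have Hsub: "subgroup H G" unfolding H_def by (rule generate_is_subgroup[OF Wc])
  have Hc: "h \<in> carrier G" if "h \<in> H" for h
    by (rule subgroup.mem_carrier[OF Hsub that])
  have HU: "\<forall>u\<in>U. u \<otimes> h \<in> U" if "h \<in> H" for h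
    using that unfolding H_def
  proof (induction rule: generate.induct)
    case one then show ?case using Uc by (simp add: subset_iff)
  next
    case (incl h)
    show ?case
    proof
      fix u assume u: "u \<in> U"
      show "u \<otimes> h \<in> U" by (rule UV1[OF u WV1[OF incl]])
    qed
  next
    case (inv h)
    show ?case
    proof
      fix u assume u: "u \<in> U"
      show "u \<otimes> inv h \<in> U" by (rule UV1[OF u WV1[OF Winv[OF inv]]])
    qed
  next
    case (eng h1 h2)
    have "h1 \<in> H" "h2 \<in> H" unfolding H_def by (rule eng.hyps(1), rule eng.hyps(2))
    then have c: "h1 \<in> carrier G" "h2 \<in> carrier G" using Hc by auto
    show ?case
    proof
      fix u assume u: "u \<in> U"
      have "u \<otimes> h1 \<in> U" using eng.IH(1) u by (rule bspec)
      then have "u \<otimes> h1 \<otimes> h2 \<in> U" using eng.IH(2) by (rule bspec[rotated])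
      moreover have "u \<in> carrier G" using u Uc by (rule subsetD[rotated])
      ultimately show "u \<otimes> (h1 \<otimes> h2) \<in> U" using c by (simp add: m_assoc)
    qed
  qed
  have HsubU: "H \<subseteq> U"
  proof
    fix h assume h: "h \<in> H"
    have "\<one> \<otimes> h \<in> U" using HU[OF h] U(3) by (rule bspec)
    then show "h \<in> U" using Hc[OF h] by simp
  qed
  have Hconj: "k \<otimes> h \<otimes> inv k \<in> H" if k: "k \<in> carrier G" and hH: "h \<in> H" for k h
    using hH unfolding H_def
  proof (induction rule: generate.induct)
    case one then show ?case using k by (simp add: generate.one)
  next
    case (incl h) then show ?case using Wconj k by (simp add: generate.incl)
  next
    case (inv h) then show ?case using Wconj Winv k by (simp add: generate.incl)
  next
    case (eng h1 h2)
    have "h1 \<in> H" "h2 \<in> H" unfolding H_def by (rule eng.hyps(1), rule eng.hyps(2))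
    then have c: "h1 \<in> carrier G" "h2 \<in> carrier G" using Hc by auto
    have "k \<otimes> (h1 \<otimes> h2) \<otimes> inv k = (k \<otimes> h1 \<otimes> inv k) \<otimes> (k \<otimes> h2 \<otimes> inv k)"
      using c k by (simp add: m_assoc gcancel1 gcancel2)
    then show ?case using eng.IH by (simp add: generate.eng)
  qed
  have Hn: "H \<lhd> G" using Hsub Hconj by (simp add: normal_inv_iff)
  have Ho: "openin T H"
  proof (subst openin_subopen, intro ballI)
    fix x assume x: "x \<in> H"
    then have xc: "x \<in> carrier G" by (rule Hc)
    have "openin T (x <# W)" by (rule tg_lcoset_open[OF tg xc Wo])
    moreover have "x \<in> x <# W"
    proof -
      have "x = x \<otimes> \<one>" using xc by simp
      then show ?thesis using W1 unfolding l_coset_def by blast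
    qed
    moreover have "x <# W \<subseteq> H"
    proof
      fix y assume "y \<in> x <# W"
      then obtain w where w: "w \<in> W" "y = x \<otimes> w" unfolding l_coset_def by blast
      have "w \<in> H" unfolding H_def using w(1) by (rule generate.incl)
      then show "y \<in> H" using x w(2) Hsub by (simp add: subgroup.m_closed)
    qed
    ultimately show "\<exists>T'. openin T T' \<and> x \<in> T' \<and> T' \<subseteq> H" by blast
  qed
  show ?thesis using Hn Ho HsubU by blast
qed


lemma (in group) profinite_sep:
  assumes pg: "profinite_group G T" and x: "x \<in> carrier G" "x \<noteq> \<one>"
  shows "\<exists>H. H \<lhd> G \<and> openin T H \<and> x \<notin> H"
proof -
  have tg: "topological_group G T" and cs: "compact_space T"
    using pg unfolding profinite_group_def by simp_all
  obtain U where U: "closedin T U" "openin T U" "\<one> \<in> U" "x \<notin> U"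
    using clopen_sep[OF pg x] by blast
  obtain H where H: "H \<lhd> G" "openin T H" "H \<subseteq> U"
    using clopen_normal[OF tg cs U(1,2,3)] by blast
  have "x \<notin> H" using H(3) U(4) by blast
  then show ?thesis using H(1,2) by blast
qed

lemma (in group) open_subgroup_closed:
  assumes tg: "topological_group G T" and As: "subgroup A G" and Bs: "subgroup B G"
    and BA: "B \<subseteq> A" and Q: "openin T Q" and BQ: "B = A \<inter> Q"
  shows "closedin (subtopology T A) B"
proof -
  have top: "topspace T = carrier G" using tg_top[OF tg] .
  have Ac: "A \<subseteq> carrier G" using subgroup.subset[OF As] .
  define R where "R = (\<Union>a\<in>A - B. a <# Q)"
  have Ro: "openin T R" unfolding R_def
  proof (rule openin_Union)
    fix S assume "S \<in> (\<lambda>a. a <# Q) ` (A - B)"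
    then obtain a where a: "a \<in> A" "S = a <# Q" by blast
    have "a \<in> carrier G" using a(1) Ac by (rule subsetD[rotated])
    then show "openin T S" unfolding a(2) by (rule tg_lcoset_open[OF tg _ Q])
  qed
  have "R \<inter> A = A - B"
  proof (intro equalityI subsetI)
    fix y assume y: "y \<in> R \<inter> A"
    then obtain a q where aq: "a \<in> A" "a \<notin> B" "q \<in> Q" "y = a \<otimes> q"
      unfolding R_def l_coset_def by blast
    have ac: "a \<in> carrier G" using aq(1) Ac by (rule subsetD[rotated])
    have yA: "y \<in> A" using y by blast
    have yc: "y \<in> carrier G" using yA Ac by (rule subsetD[rotated])
    have "inv a \<in> A" by (rule subgroup.m_inv_closed[OF As aq(1)])
    then have "inv a \<otimes> y \<in> A" by (rule subgroup.m_closed[OF As _ yA])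
    moreover have qc: "q \<in> carrier G" using aq(3) Q top openin_subset by blast
    moreover have "inv a \<otimes> y = q" using aq(4) ac qc by (simp add: gcancel2)
    ultimately have qA: "q \<in> A" by simp
    then have qB: "q \<in> B" using aq(3) BQ by blast
    have "y \<notin> B"
    proof
      assume yB: "y \<in> B"
      have "inv q \<in> B" by (rule subgroup.m_inv_closed[OF Bs qB])
      then have "y \<otimes> inv q \<in> B" by (rule subgroup.m_closed[OF Bs yB])
      moreover have "y \<otimes> inv q = a" using aq(4) ac qc by (simp add: m_assoc)
      ultimately show False using aq(2) by simp
    qed
    then show "y \<in> A - B" using yA by blast
  next
    fix a assume a: "a \<in> A - B"
    have ac: "a \<in> carrier G" using a Ac by blast
    have "\<one> \<in> Q" using subgroup.one_closed[OF Bs] BQ by blast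
    moreover have "a = a \<otimes> \<one>" using ac by simp
    ultimately have "a \<in> a <# Q" unfolding l_coset_def by blast
    then show "a \<in> R \<inter> A" using a unfolding R_def by blast
  qed
  then have "openin (subtopology T A) (A - B)"
    unfolding openin_subtopology using Ro by blast
  moreover have "topspace (subtopology T A) = A" using Ac top by auto
  ultimately show ?thesis using BA unfolding closedin_def by simp
qed

lemma (in group) discrete_finite:
  assumes tg: "topological_group G T" and cs: "compact_space T" and Ss: "subgroup S G"
    and Scl: "closedin T S" and Q: "openin T Q" and SQ: "S \<inter> Q = {\<one>}"
  shows "finite S"
proof -
  have top: "topspace T = carrier G" using tg_top[OF tg] .
  have Sc: "S \<subseteq> carrier G" using subgroup.subset[OF Ss] .
  have "compactin T S" using closedin_compact_space[OF cs Scl] .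
  then have cov: "\<And>\<U>. (\<forall>U\<in>\<U>. openin T U) \<and> S \<subseteq> \<Union>\<U> \<Longrightarrow> (\<exists>\<F>. finite \<F> \<and> \<F> \<subseteq> \<U> \<and> S \<subseteq> \<Union>\<F>)"
    unfolding compactin_def by blast
  have q1: "\<one> \<in> Q" using SQ by blast
  have o: "\<forall>U\<in>(\<lambda>s. s <# Q) ` S. openin T U"
  proof
    fix U assume "U \<in> (\<lambda>s. s <# Q) ` S"
    then obtain s where s: "s \<in> S" "U = s <# Q" by blast
    have "s \<in> carrier G" using s(1) Sc by (rule subsetD[rotated])
    then show "openin T U" unfolding s(2) by (rule tg_lcoset_open[OF tg _ Q])
  qed
  have c: "S \<subseteq> \<Union>((\<lambda>s. s <# Q) ` S)"
  proof
    fix s assume s: "s \<in> S"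
    have "s = s \<otimes> \<one>" using s Sc by auto
    then have "s \<in> s <# Q" using q1 unfolding l_coset_def by blast
    then show "s \<in> \<Union>((\<lambda>s. s <# Q) ` S)" using s by blast
  qed
  obtain F where F: "finite F" "F \<subseteq> (\<lambda>s. s <# Q) ` S" "S \<subseteq> \<Union>F"
    using cov[of "(\<lambda>s. s <# Q) ` S"] o c by blast
  obtain S' where S': "S' \<subseteq> S" "finite S'" "F = (\<lambda>s. s <# Q) ` S'"
    using finite_subset_image[OF F(1) F(2)] by blast
  have "S \<subseteq> S'"
  proof
    fix y assume y: "y \<in> S"
    then obtain s where s: "s \<in> S'" "y \<in> s <# Q" using F(3) S'(3) by blast
    then obtain q where q: "q \<in> Q" "y = s \<otimes> q" unfolding l_coset_def by blast
    have sS: "s \<in> S" using s(1) S'(1) by blast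
    have sc: "s \<in> carrier G" using sS Sc by blast
    have qc: "q \<in> carrier G" using q(1) Q top openin_subset by blast
    have "inv s \<in> S" by (rule subgroup.m_inv_closed[OF Ss sS])
    then have "inv s \<otimes> y \<in> S" by (rule subgroup.m_closed[OF Ss _ y])
    moreover have "inv s \<otimes> y = q" using q(2) sc qc by (simp add: gcancel2)
    ultimately have "q \<in> S \<inter> Q" using q(1) by simp
    then have "q = \<one>" using SQ by blast
    then have "y = s" using q(2) sc by simp
    then show "y \<in> S'" using s(1) by simp
  qed
  then show ?thesis using S'(2) by (rule finite_subset)
qed

lemma (in group) part1_core:
  assumes An: "A \<lhd> G" and ab: "\<forall>x\<in>A. \<forall>y\<in>A. x \<otimes> y = y \<otimes> x"
    and B: "subgroup B G" "B \<subseteq> A"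
    and K: "subgroup K G" "B <#> K = carrier G" "B \<inter> K = {\<one>}"
  shows "K \<inter> A \<lhd> G \<and> B <#> (K \<inter> A) = A \<and> B \<inter> (K \<inter> A) = {\<one>}"
proof -
  have As: "subgroup A G" using An normal_imp_subgroup by blast
  have Ac: "A \<subseteq> carrier G" using As subgroup.subset by blast
  have Bc: "B \<subseteq> carrier G" using B subgroup.subset by blast
  have Kc: "K \<subseteq> carrier G" using K subgroup.subset by blast
  have Ls: "subgroup (K \<inter> A) G" by (rule subgroups_Inter_pair[OF K(1) As])
  have decomp: "\<exists>b\<in>B. \<exists>k\<in>K. g = b \<otimes> k" if "g \<in> carrier G" for g
    using that K(2) unfolding set_mult_def by blast
  have "\<forall>g\<in>carrier G. \<forall>l\<in>K \<inter> A. g \<otimes> l \<otimes> inv g \<in> K \<inter> A"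
  proof (intro ballI)
    fix g l assume g: "g \<in> carrier G" and l: "l \<in> K \<inter> A"
    obtain b k where bk: "b \<in> B" "k \<in> K" "g = b \<otimes> k" using decomp[OF g] by blast
    have bc: "b \<in> carrier G" and kc: "k \<in> carrier G" and lc: "l \<in> carrier G"
      using bk l Bc Kc by auto
    define m where "m = k \<otimes> l \<otimes> inv k"
    have lK: "l \<in> K" using l by blast
    have mK: "m \<in> K" unfolding m_def
      by (rule subgroup.m_closed[OF K(1) subgroup.m_closed[OF K(1) bk(2) lK] subgroup.m_inv_closed[OF K(1) bk(2)]])
    have mA: "m \<in> A" unfolding m_def using An kc l normal_inv_iff by blast
    have mc: "m \<in> carrier G" using mA Ac by blast
    have bA: "b \<in> A" using bk B by blast
    have "g \<otimes> l \<otimes> inv g = b \<otimes> m \<otimes> inv b"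
      unfolding m_def bk(3) using bc kc lc by (simp add: m_assoc inv_mult_group gcancel1 gcancel2)
    also have "\<dots> = m \<otimes> b \<otimes> inv b"
    proof -
      have "b \<otimes> m = m \<otimes> b" using ab bA mA by blast
      then show ?thesis by simp
    qed
    also have "\<dots> = m" using mc bc by (simp add: m_assoc)
    finally show "g \<otimes> l \<otimes> inv g \<in> K \<inter> A" using mK mA by simp
  qed
  then have Ln: "K \<inter> A \<lhd> G" using Ls by (simp add: normal_inv_iff)
  have "B <#> (K \<inter> A) \<subseteq> A"
  proof
    fix x assume "x \<in> B <#> (K \<inter> A)"
    then obtain b l where "b \<in> B" "l \<in> K \<inter> A" "x = b \<otimes> l" unfolding set_mult_def by blast
    then show "x \<in> A" using B(2) As by (auto intro: subgroup.m_closed)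
  qed
  moreover have "A \<subseteq> B <#> (K \<inter> A)"
  proof
    fix a assume a: "a \<in> A"
    then have ac: "a \<in> carrier G" using Ac by blast
    obtain b k where bk: "b \<in> B" "k \<in> K" "a = b \<otimes> k" using decomp[OF ac] by blast
    have bc: "b \<in> carrier G" and kc: "k \<in> carrier G" using bk Bc Kc by auto
    have "k = inv b \<otimes> a" using bk bc kc by (simp add: gcancel2)
    moreover have "inv b \<in> A"
    proof -
      have "b \<in> A" using bk(1) B(2) by blast
      then show ?thesis by (rule subgroup.m_inv_closed[OF As])
    qed
    ultimately have "k \<in> A" using subgroup.m_closed[OF As \<open>inv b \<in> A\<close> a] by simp
    then show "a \<in> B <#> (K \<inter> A)" using bk unfolding set_mult_def by blast
  qed
  moreover have "B \<inter> (K \<inter> A) = {\<one>}"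
  proof -
    have "\<one> \<in> A" by (rule subgroup.one_closed[OF As])
    then show ?thesis using K(3) by blast
  qed
  ultimately show ?thesis using Ln by blast
qed

lemma (in group) prime_if_no_subgroups:
  assumes fin: "finite (carrier G)" and nt: "carrier G \<noteq> {\<one>}"
    and sg: "\<forall>S. subgroup S G \<longrightarrow> S = {\<one>} \<or> S = carrier G"
  shows "prime (order G)"
proof -
  obtain x where x: "x \<in> carrier G" "x \<noteq> \<one>" using nt one_closed by blast
  have gx: "generate G {x} = carrier G"
  proof -
    have "subgroup (generate G {x}) G" using x by (intro generate_is_subgroup) auto
    moreover have "x \<in> generate G {x}" by (rule generate.incl) simp
    ultimately show ?thesis using sg x by blast
  qed
  have ordx: "ord x = order G" using generate_pow_card[OF x(1)] gx by (simp add: order_def)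
  have n1: "1 < order G"
  proof -
    have "{\<one>, x} \<subseteq> carrier G" using x by simp
    then have "card {\<one>, x} \<le> order G" unfolding order_def using fin card_mono by blast
    then show ?thesis using x by simp
  qed
  show ?thesis
  proof (rule ccontr)
    assume np: "\<not> prime (order G)"
    then obtain d where d: "d dvd order G" "d \<noteq> 1" "d \<noteq> order G"
      using n1 unfolding prime_nat_iff by blast
    have d0: "d \<noteq> 0" using d n1 by auto
    define y where "y = x [^] d"
    have yc: "y \<in> carrier G" unfolding y_def using x by simp
    have "ord y = order G div d"
      unfolding y_def using ord_pow_gen[OF x(1), of d] d0 ordx d(1)
      by (simp add: gcd_nat.absorb2)
    then have cy: "card (generate G {y}) = order G div d" using generate_pow_card[OF yc] by simp
    have "subgroup (generate G {y}) G" using yc by (intro generate_is_subgroup) auto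
    then have "generate G {y} = {\<one>} \<or> generate G {y} = carrier G" using sg by blast
    then have "order G div d = 1 \<or> order G div d = order G" using cy by (auto simp: order_def)
    moreover have "order G div d \<noteq> 1"
      using d d0 n1 by (metis dvd_mult_div_cancel mult.right_neutral)
    moreover have "order G div d \<noteq> order G"
    proof -
      have "1 < d" using d d0 by auto
      then have "order G div d < order G" using n1 by (simp add: div_less_dividend)
      then show ?thesis by simp
    qed
    ultimately show False by blast
  qed
qed


lemma rcos_upd: "r_coset (G\<lparr>carrier := A\<rparr>) B a = r_coset G B a"
  unfolding r_coset_def by simp

lemma smult_upd: "set_mult (G\<lparr>carrier := A\<rparr>) X Y = set_mult G X Y"
  unfolding set_mult_def by simp

lemma (in group) set_mult_one_right:
  assumes "P \<subseteq> carrier G" shows "P <#> {\<one>} = P"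
proof (intro equalityI subsetI)
  fix x assume "x \<in> P <#> {\<one>}"
  then obtain p where p: "p \<in> P" "x = p \<otimes> \<one>" unfolding set_mult_def by blast
  have "p \<in> carrier G" using p(1) assms by (rule subsetD[rotated])
  then show "x \<in> P" using p by simp
next
  fix x assume x: "x \<in> P"
  have "x \<in> carrier G" using x assms by (rule subsetD[rotated])
  then have "x = x \<otimes> \<one>" by simp
  then show "x \<in> P <#> {\<one>}" using x unfolding set_mult_def by blast
qed

lemma (in group) part1:
  assumes pc: "profinite_C_group G T" and An: "A \<lhd> G" and Acl: "closedin T A"
    and ab: "\<forall>x\<in>A. \<forall>y\<in>A. x \<otimes> y = y \<otimes> x"
  shows "\<forall>B. closed_subgroup G T B \<and> B \<subseteq> A \<longrightarrow>
            (\<exists>L. L \<lhd> G \<and> closedin T L \<and> L \<subseteq> A \<and> B <#> L = A \<and> B \<inter> L = {\<one>})"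
proof (intro allI impI)
  fix B assume hB: "closed_subgroup G T B \<and> B \<subseteq> A"
  then have cB: "closed_subgroup G T B" and BA: "B \<subseteq> A" by simp_all
  then have Bs: "subgroup B G" unfolding closed_subgroup_def by simp
  have "\<forall>H. closed_subgroup G T H \<longrightarrow> (\<exists>K. closed_subgroup G T K \<and> permutable_complement G H K)"
    using pc unfolding profinite_C_group_def by simp
  then obtain K where K: "closed_subgroup G T K" "permutable_complement G B K"
    using cB by blast
  have Kcl: "closedin T K" using K(1) unfolding closed_subgroup_def by simp
  have Ks: "subgroup K G" "B <#> K = carrier G" "B \<inter> K = {\<one>}"
    using K(2) unfolding permutable_complement_def by simp_all
  have core: "K \<inter> A \<lhd> G \<and> B <#> (K \<inter> A) = A \<and> B \<inter> (K \<inter> A) = {\<one>}"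
    by (rule part1_core[OF An ab Bs BA Ks])
  have "closedin T (K \<inter> A)" by (rule closedin_Int[OF Kcl Acl])
  moreover have "K \<inter> A \<subseteq> A" by blast
  ultimately show "\<exists>L. L \<lhd> G \<and> closedin T L \<and> L \<subseteq> A \<and> B <#> L = A \<and> B \<inter> L = {\<one>}"
    using core by blast
qed

lemma (in group) open_normal_closed:
  assumes tg: "topological_group G T" and Hn: "H \<lhd> G" and Ho: "openin T H"
  shows "closedin T H"
proof -
  have Hs: "subgroup H G" using Hn by (rule normal_imp_subgroup)
  have "H \<subseteq> carrier G" using subgroup.subset[OF Hs] .
  then have "H = carrier G \<inter> H" by blast
  from open_subgroup_closed[OF tg subgroup_self Hs \<open>H \<subseteq> carrier G\<close> Ho this]
  show ?thesis using tg_top[OF tg] by (metis subtopology_topspace)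
qed


lemma (in group) part2:
  assumes pc: "profinite_C_group G T" and An: "A \<lhd> G" and Acl: "closedin T A"
    and ab: "\<forall>x\<in>A. \<forall>y\<in>A. x \<otimes> y = y \<otimes> x"
  shows "minimal_closed_normal G T A \<longrightarrow> prime (card A)"
proof
  assume min: "minimal_closed_normal G T A"
  have Ane: "A \<noteq> {\<one>}" using min unfolding minimal_closed_normal_def by simp
  have mp: "\<And>M. M \<lhd> G \<Longrightarrow> closedin T M \<Longrightarrow> M \<subseteq> A \<Longrightarrow> M \<noteq> {\<one>} \<Longrightarrow> M = A"
    using min unfolding minimal_closed_normal_def by blast
  have pg: "profinite_group G T" using pc unfolding profinite_C_group_def by simp
  have tg: "topological_group G T" and cs: "compact_space T" and hs: "Hausdorff_space T"
    using pg unfolding profinite_group_def by simp_all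
  have top: "topspace T = carrier G" using tg_top[OF tg] .
  have As: "subgroup A G" using An by (rule normal_imp_subgroup)
  have Ac: "A \<subseteq> carrier G" using subgroup.subset[OF As] .
  have one_A: "\<one> \<in> A" by (rule subgroup.one_closed[OF As])
  obtain x where x: "x \<in> A" "x \<noteq> \<one>" using Ane one_A by blast
  have xc: "x \<in> carrier G" using x(1) Ac by (rule subsetD[rotated])
  obtain H where H: "H \<lhd> G" "openin T H" "x \<notin> H"
    using profinite_sep[OF pg xc x(2)] by blast
  have Hcl: "closedin T H" by (rule open_normal_closed[OF tg H(1,2)])
  have "H \<inter> A = {\<one>}"
  proof (rule ccontr)
    assume "H \<inter> A \<noteq> {\<one>}"
    moreover have "H \<inter> A \<lhd> G" by (rule normal_subgroup_intersect[OF H(1) An])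
    moreover have "closedin T (H \<inter> A)" by (rule closedin_Int[OF Hcl Acl])
    moreover have "H \<inter> A \<subseteq> A" by blast
    ultimately have "H \<inter> A = A" using mp by blast
    then show False using x(1) H(3) by blast
  qed
  then have "A \<inter> H = {\<one>}" by blast
  have finA: "finite A" by (rule discrete_finite[OF tg cs As Acl H(2) \<open>A \<inter> H = {\<one>}\<close>])
  have t1: "t1_space T" using hs by (rule Hausdorff_imp_t1_space)
  have clfin: "closedin T S" if "finite S" "S \<subseteq> carrier G" for S
    using t1 that top unfolding t1_space_closedin_finite by simp
  have p1: "\<forall>B. closed_subgroup G T B \<and> B \<subseteq> A \<longrightarrow>
            (\<exists>L. L \<lhd> G \<and> closedin T L \<and> L \<subseteq> A \<and> B <#> L = A \<and> B \<inter> L = {\<one>})"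
    by (rule part1[OF pc An Acl ab])
  have grpA: "group (G\<lparr>carrier := A\<rparr>)" by (rule subgroup.subgroup_is_group[OF As is_group])
  have nosub: "\<forall>P. subgroup P (G\<lparr>carrier := A\<rparr>) \<longrightarrow> P = {\<one>\<^bsub>G\<lparr>carrier := A\<rparr>\<^esub>} \<or> P = carrier (G\<lparr>carrier := A\<rparr>)"
  proof (intro allI impI)
    fix P assume P: "subgroup P (G\<lparr>carrier := A\<rparr>)"
    have Ps: "subgroup P G" by (rule incl_subgroup[OF As P])
    have PA: "P \<subseteq> A" using subgroup.subset[OF P] by simp
    have Pc: "P \<subseteq> carrier G" using PA Ac by blast
    have "finite P" using finA PA by (rule finite_subset[rotated])
    then have Pcl: "closedin T P" using Pc by (rule clfin)
    have "closed_subgroup G T P" unfolding closed_subgroup_def using Ps Pcl by simp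
    then obtain L where L: "L \<lhd> G" "closedin T L" "L \<subseteq> A" "P <#> L = A" "P \<inter> L = {\<one>}"
      using p1 PA by blast
    show "P = {\<one>\<^bsub>G\<lparr>carrier := A\<rparr>\<^esub>} \<or> P = carrier (G\<lparr>carrier := A\<rparr>)"
    proof (cases "L = {\<one>}")
      case True
      then have "P = A" using L(4) set_mult_one_right[OF Pc] by simp
      then show ?thesis by simp
    next
      case False
      then have "L = A" using mp L(1,2,3) by blast
      then have "P = {\<one>}" using L(5) PA by blast
      then show ?thesis by simp
    qed
  qed
  have "carrier (G\<lparr>carrier := A\<rparr>) \<noteq> {\<one>\<^bsub>G\<lparr>carrier := A\<rparr>\<^esub>}" using Ane by simp
  moreover have "finite (carrier (G\<lparr>carrier := A\<rparr>))" using finA by simp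
  ultimately have "prime (order (G\<lparr>carrier := A\<rparr>))"
    using group.prime_if_no_subgroups[OF grpA] nosub by blast
  then show "prime (card A)" unfolding order_def by simp
qed

lemma (in group) part4:
  assumes pc: "profinite_C_group G T" and An: "A \<lhd> G" and Acl: "closedin T A"
    and ab: "\<forall>x\<in>A. \<forall>y\<in>A. x \<otimes> y = y \<otimes> x"
  shows "A \<noteq> {\<one>} \<longrightarrow> (\<exists>N. minimal_closed_normal G T N \<and> N \<subseteq> A)"
proof
  assume Ane: "A \<noteq> {\<one>}"
  have pg: "profinite_group G T" using pc unfolding profinite_C_group_def by simp
  have tg: "topological_group G T" and cs: "compact_space T" and hs: "Hausdorff_space T"
    using pg unfolding profinite_group_def by simp_all
  have top: "topspace T = carrier G" using tg_top[OF tg] .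
  have As: "subgroup A G" using An by (rule normal_imp_subgroup)
  have Ac: "A \<subseteq> carrier G" using subgroup.subset[OF As] .
  have one_A: "\<one> \<in> A" by (rule subgroup.one_closed[OF As])
  obtain x where x: "x \<in> A" "x \<noteq> \<one>" using Ane one_A by blast
  have xc: "x \<in> carrier G" using x(1) Ac by (rule subsetD[rotated])
  obtain H where H: "H \<lhd> G" "openin T H" "x \<notin> H"
    using profinite_sep[OF pg xc x(2)] by blast
  have Hcl: "closedin T H" by (rule open_normal_closed[OF tg H(1,2)])
  define B0 where "B0 = H \<inter> A"
  have B0n: "B0 \<lhd> G" unfolding B0_def by (rule normal_subgroup_intersect[OF H(1) An])
  have B0s: "subgroup B0 G" using B0n by (rule normal_imp_subgroup)
  have B0cl: "closedin T B0" unfolding B0_def by (rule closedin_Int[OF Hcl Acl])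
  have B0A: "B0 \<subseteq> A" unfolding B0_def by blast
  have p1: "\<forall>B. closed_subgroup G T B \<and> B \<subseteq> A \<longrightarrow>
            (\<exists>L. L \<lhd> G \<and> closedin T L \<and> L \<subseteq> A \<and> B <#> L = A \<and> B \<inter> L = {\<one>})"
    by (rule part1[OF pc An Acl ab])
  have "closed_subgroup G T B0" unfolding closed_subgroup_def using B0s B0cl by simp
  then obtain L where L: "L \<lhd> G" "closedin T L" "L \<subseteq> A" "B0 <#> L = A" "B0 \<inter> L = {\<one>}"
    using p1 B0A by blast
  have Ls: "subgroup L G" using L(1) by (rule normal_imp_subgroup)
  have Lc: "L \<subseteq> carrier G" using subgroup.subset[OF Ls] .
  have one_L: "\<one> \<in> L" by (rule subgroup.one_closed[OF Ls])
  have "L \<inter> H = {\<one>}"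
  proof -
    have "L \<inter> H \<subseteq> B0 \<inter> L" using L(3) unfolding B0_def by blast
    moreover have "\<one> \<in> H" by (rule subgroup.one_closed[OF normal_imp_subgroup[OF H(1)]])
    ultimately show ?thesis using L(5) one_L by blast
  qed
  have finL: "finite L" by (rule discrete_finite[OF tg cs Ls L(2) H(2) \<open>L \<inter> H = {\<one>}\<close>])
  have Lne: "L \<noteq> {\<one>}"
  proof
    assume "L = {\<one>}"
    then have "B0 = A" using L(4) set_mult_one_right[OF subgroup.subset[OF B0s]] by simp
    then show False using x(1) H(3) unfolding B0_def by blast
  qed
  have t1: "t1_space T" using hs by (rule Hausdorff_imp_t1_space)
  have clfin: "closedin T S" if "finite S" "S \<subseteq> carrier G" for S
    using t1 that top unfolding t1_space_closedin_finite by simp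
  define P where "P = (\<lambda>M. M \<lhd> G \<and> M \<subseteq> L \<and> M \<noteq> {\<one>})"
  have PL: "P L" unfolding P_def using L(1) Lne by simp
  define M where "M = arg_min card P"
  have Mm: "P M \<and> (\<forall>y. P y \<longrightarrow> card M \<le> card y)"
    unfolding M_def by (rule arg_min_nat_lemma[where P=P and k=L and m=card, OF PL])
  then have Mn: "M \<lhd> G" and MsubL: "M \<subseteq> L" and Mne: "M \<noteq> {\<one>}"
    and Mle: "\<And>y. P y \<Longrightarrow> card M \<le> card y" unfolding P_def by blast+
  have finM: "finite M" using finL MsubL by (rule finite_subset[rotated])
  have Mc: "M \<subseteq> carrier G" using MsubL Lc by blast
  have Mcl: "closedin T M" using finM Mc by (rule clfin)
  have "minimal_closed_normal G T M"
    unfolding minimal_closed_normal_def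
  proof (intro conjI allI impI)
    show "M \<lhd> G" "closedin T M" "M \<noteq> {\<one>}" by (rule Mn, rule Mcl, rule Mne)
  next
    fix M' assume M': "M' \<lhd> G \<and> closedin T M' \<and> M' \<subseteq> M \<and> M' \<noteq> {\<one>}"
    then have "P M'" unfolding P_def using MsubL by blast
    then have "card M \<le> card M'" by (rule Mle)
    moreover have "card M' \<le> card M" using finM M' by (simp add: card_mono)
    ultimately have "card M' = card M" by simp
    then show "M' = M" using card_subset_eq[OF finM] M' by blast
  qed
  then show "\<exists>N. minimal_closed_normal G T N \<and> N \<subseteq> A" using MsubL L(3) by blast
qed


lemma (in group) prod_normal:
  assumes An: "A \<lhd> G" and ab: "\<forall>x\<in>A. \<forall>y\<in>A. x \<otimes> y = y \<otimes> x"
    and Bn: "B \<lhd> G" "B \<subseteq> A" and Mn: "M \<lhd> G" "M \<subseteq> A"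
  shows "B <#> M \<lhd> G"
proof -
  have As: "subgroup A G" using An by (rule normal_imp_subgroup)
  have Bs: "subgroup B G" using Bn(1) by (rule normal_imp_subgroup)
  have Ms: "subgroup M G" using Mn(1) by (rule normal_imp_subgroup)
  have grpA: "group (G\<lparr>carrier := A\<rparr>)" by (rule subgroup.subgroup_is_group[OF As is_group])
  have cA: "comm_group (G\<lparr>carrier := A\<rparr>)"
  proof (rule group.group_comm_groupI[OF grpA])
    fix x y assume "x \<in> carrier (G\<lparr>carrier := A\<rparr>)" "y \<in> carrier (G\<lparr>carrier := A\<rparr>)"
    then have "x \<in> A" "y \<in> A" by simp_all
    then have "x \<otimes> y = y \<otimes> x" using ab by blast
    then show "x \<otimes>\<^bsub>G\<lparr>carrier := A\<rparr>\<^esub> y = y \<otimes>\<^bsub>G\<lparr>carrier := A\<rparr>\<^esub> x" by simp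
  qed
  have BsA: "subgroup B (G\<lparr>carrier := A\<rparr>)" by (rule subgroup_incl[OF Bs As Bn(2)])
  have MsA: "subgroup M (G\<lparr>carrier := A\<rparr>)" by (rule subgroup_incl[OF Ms As Mn(2)])
  have "subgroup (B <#>\<^bsub>G\<lparr>carrier := A\<rparr>\<^esub> M) (G\<lparr>carrier := A\<rparr>)"
    by (rule comm_group.mult_subgroups[OF cA BsA MsA])
  then have "subgroup (B <#> M) (G\<lparr>carrier := A\<rparr>)" by (simp add: smult_upd)
  then have BMs: "subgroup (B <#> M) G" by (rule incl_subgroup[OF As])
  have "\<forall>g\<in>carrier G. \<forall>y\<in>B <#> M. g \<otimes> y \<otimes> inv g \<in> B <#> M"
  proof (intro ballI)
    fix g y assume g: "g \<in> carrier G" and y: "y \<in> B <#> M"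
    then obtain b m where bm: "b \<in> B" "m \<in> M" "y = b \<otimes> m" unfolding set_mult_def by blast
    have bc: "b \<in> carrier G" using subgroup.mem_carrier[OF Bs bm(1)] .
    have mc: "m \<in> carrier G" using subgroup.mem_carrier[OF Ms bm(2)] .
    have "g \<otimes> b \<otimes> inv g \<in> B" using Bn(1) g bm(1) normal_inv_iff by blast
    moreover have "g \<otimes> m \<otimes> inv g \<in> M" using Mn(1) g bm(2) normal_inv_iff by blast
    moreover have "g \<otimes> y \<otimes> inv g = (g \<otimes> b \<otimes> inv g) \<otimes> (g \<otimes> m \<otimes> inv g)"
      unfolding bm(3) using g bc mc by (simp add: m_assoc gcancel2)
    ultimately show "g \<otimes> y \<otimes> inv g \<in> B <#> M" unfolding set_mult_def by blast
  qed
  then show ?thesis using BMs by (simp add: normal_inv_iff)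
qed

lemma (in group) part3:
  assumes pc: "profinite_C_group G T" and An: "A \<lhd> G" and Acl: "closedin T A"
    and ab: "\<forall>x\<in>A. \<forall>y\<in>A. x \<otimes> y = y \<otimes> x"
  shows "\<forall>B. A \<noteq> {\<one>} \<and>
            (B \<lhd> G \<and> B \<subseteq> A \<and> B \<noteq> A \<and> openin (subtopology T A) B) \<and>
            (\<forall>C. C \<lhd> G \<and> C \<subseteq> A \<and> C \<noteq> A \<and> openin (subtopology T A) C \<and> B \<subseteq> C
                 \<longrightarrow> C = B)
          \<longrightarrow> (\<exists>N \<phi>. minimal_closed_normal G T N \<and> N \<subseteq> A \<and>
                 \<phi> \<in> iso ((G\<lparr>carrier := A\<rparr>) Mod B) (G\<lparr>carrier := N\<rparr>) \<and>
                 (\<forall>g\<in>carrier G. \<forall>a\<in>A.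
                    \<phi> (B #> (g \<otimes> a \<otimes> inv g))
                    = g \<otimes> \<phi> (B #> a) \<otimes> inv g))"
proof (intro allI impI)
  fix B
  assume hyp: "A \<noteq> {\<one>} \<and>
            (B \<lhd> G \<and> B \<subseteq> A \<and> B \<noteq> A \<and> openin (subtopology T A) B) \<and>
            (\<forall>C. C \<lhd> G \<and> C \<subseteq> A \<and> C \<noteq> A \<and> openin (subtopology T A) C \<and> B \<subseteq> C
                 \<longrightarrow> C = B)"
  then have Bn: "B \<lhd> G" and BA: "B \<subseteq> A" and BneA: "B \<noteq> A" and Bo: "openin (subtopology T A) B"
    and maxB: "\<And>C. C \<lhd> G \<Longrightarrow> C \<subseteq> A \<Longrightarrow> C \<noteq> A \<Longrightarrow> openin (subtopology T A) C \<Longrightarrow> B \<subseteq> C \<Longrightarrow> C = B"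
    by blast+
  have pg: "profinite_group G T" using pc unfolding profinite_C_group_def by simp
  have tg: "topological_group G T" using pg unfolding profinite_group_def by simp
  have top: "topspace T = carrier G" using tg_top[OF tg] .
  have As: "subgroup A G" using An by (rule normal_imp_subgroup)
  have Ac: "A \<subseteq> carrier G" using subgroup.subset[OF As] .
  have Bs: "subgroup B G" using Bn by (rule normal_imp_subgroup)
  have Bc: "B \<subseteq> carrier G" using subgroup.subset[OF Bs] .
  obtain Q where Q: "openin T Q" "B = Q \<inter> A" using Bo unfolding openin_subtopology by blast
  have Qc: "Q \<subseteq> carrier G" using openin_subset[OF Q(1)] top by simp
  have "B = A \<inter> Q" using Q(2) by blast
  then have "closedin (subtopology T A) B" by (rule open_subgroup_closed[OF tg As Bs BA Q(1)])
  then have Bcl: "closedin T B" using Acl by (rule closedin_trans_full)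
  have p1: "\<forall>B. closed_subgroup G T B \<and> B \<subseteq> A \<longrightarrow>
            (\<exists>L. L \<lhd> G \<and> closedin T L \<and> L \<subseteq> A \<and> B <#> L = A \<and> B \<inter> L = {\<one>})"
    by (rule part1[OF pc An Acl ab])
  have "closed_subgroup G T B" unfolding closed_subgroup_def using Bs Bcl by simp
  then obtain L where L: "L \<lhd> G" "closedin T L" "L \<subseteq> A" "B <#> L = A" "B \<inter> L = {\<one>}"
    using p1 BA by blast
  have Ls: "subgroup L G" using L(1) by (rule normal_imp_subgroup)
  have Lc: "L \<subseteq> carrier G" using subgroup.subset[OF Ls] .
  have uniq: "l = l'" if c: "c \<in> A" and l: "l \<in> L" "l \<in> B #> c" and l': "l' \<in> L" "l' \<in> B #> c" for c l l'
  proof -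
    obtain b where b: "b \<in> B" "l = b \<otimes> c" using l(2) unfolding r_coset_def by blast
    obtain b' where b': "b' \<in> B" "l' = b' \<otimes> c" using l'(2) unfolding r_coset_def by blast
    have cc: "c \<in> carrier G" using c Ac by blast
    have bc: "b \<in> carrier G" "b' \<in> carrier G" using b(1) b'(1) Bc by blast+
    have lc: "l \<in> carrier G" "l' \<in> carrier G" using l(1) l'(1) Lc by blast+
    have "l \<otimes> inv l' = b \<otimes> inv b'"
      unfolding b(2) b'(2) using cc bc by (simp add: m_assoc inv_mult_group gcancel1)
    moreover have "b \<otimes> inv b' \<in> B"
      by (rule subgroup.m_closed[OF Bs b(1) subgroup.m_inv_closed[OF Bs b'(1)]])
    moreover have "l \<otimes> inv l' \<in> L"
      by (rule subgroup.m_closed[OF Ls l(1) subgroup.m_inv_closed[OF Ls l'(1)]])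
    ultimately have "l \<otimes> inv l' \<in> B \<inter> L" by simp
    then have e: "l \<otimes> inv l' = \<one>" using L(5) by blast
    have "inv (inv l') = l" by (rule inv_equality[OF e]) (use lc in simp_all)
    then show "l = l'" using lc by simp
  qed
  have exist: "\<exists>l. l \<in> L \<and> l \<in> B #> c" if c: "c \<in> A" for c
  proof -
    have "c \<in> B <#> L" using c L(4) by simp
    then obtain b l where bl: "b \<in> B" "l \<in> L" "c = b \<otimes> l" unfolding set_mult_def by blast
    have bc: "b \<in> carrier G" using bl(1) Bc by blast
    have lc: "l \<in> carrier G" using bl(2) Lc by blast
    have "l = inv b \<otimes> c" using bl(3) bc lc by (simp add: gcancel2)
    moreover have "inv b \<in> B" by (rule subgroup.m_inv_closed[OF Bs bl(1)])
    ultimately have "l \<in> B #> c" unfolding r_coset_def by blast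
    then show ?thesis using bl(2) by blast
  qed
  define \<phi> where "\<phi> X = (THE l. l \<in> L \<and> l \<in> X)" for X
  have phi_mem: "\<phi> (B #> c) \<in> L \<and> \<phi> (B #> c) \<in> B #> c" if c: "c \<in> A" for c
  proof -
    have "\<exists>!l. l \<in> L \<and> l \<in> B #> c"
    proof -
      obtain l where "l \<in> L \<and> l \<in> B #> c" using exist[OF c] by blast
      moreover have "\<And>l'. l' \<in> L \<and> l' \<in> B #> c \<Longrightarrow> l' = l"
        using uniq[OF c] calculation by blast
      ultimately show ?thesis by (rule ex1I)
    qed
    then show ?thesis unfolding \<phi>_def by (rule theI')
  qed
  have phi_char: "\<phi> (B #> c) = l" if c: "c \<in> A" and l: "l \<in> L" "l \<in> B #> c" for c l
  proof -
    have "(THE l. l \<in> L \<and> l \<in> B #> c) = l"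
    proof (rule the_equality)
      show "l \<in> L \<and> l \<in> B #> c" using l by simp
      fix l' assume "l' \<in> L \<and> l' \<in> B #> c"
      then show "l' = l" using uniq[OF c] l by blast
    qed
    then show ?thesis unfolding \<phi>_def .
  qed
  have carQ: "carrier ((G\<lparr>carrier := A\<rparr>) Mod B) = (\<lambda>a. B #> a) ` A"
    unfolding FactGroup_def RCOSETS_def by (auto simp: rcos_upd)
  have mulQ: "X \<otimes>\<^bsub>(G\<lparr>carrier := A\<rparr>) Mod B\<^esub> Y = X <#> Y" for X Y
    unfolding FactGroup_def by (simp add: smult_upd)
  have hom: "\<phi> \<in> hom ((G\<lparr>carrier := A\<rparr>) Mod B) (G\<lparr>carrier := L\<rparr>)"
    unfolding hom_def
  proof (intro CollectI conjI ballI)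
    show "\<phi> \<in> carrier ((G\<lparr>carrier := A\<rparr>) Mod B) \<rightarrow> carrier (G\<lparr>carrier := L\<rparr>)"
    proof
      fix X assume "X \<in> carrier ((G\<lparr>carrier := A\<rparr>) Mod B)"
      then obtain a where a: "a \<in> A" "X = B #> a" using carQ by blast
      then show "\<phi> X \<in> carrier (G\<lparr>carrier := L\<rparr>)" using phi_mem[OF a(1)] by simp
    qed
  next
    fix X Y assume X: "X \<in> carrier ((G\<lparr>carrier := A\<rparr>) Mod B)" and Y: "Y \<in> carrier ((G\<lparr>carrier := A\<rparr>) Mod B)"
    obtain a where a: "a \<in> A" "X = B #> a" using X carQ by blast
    obtain a' where a': "a' \<in> A" "Y = B #> a'" using Y carQ by blast
    have ac: "a \<in> carrier G" "a' \<in> carrier G" using a(1) a'(1) Ac by blast+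
    have XY: "X <#> Y = B #> (a \<otimes> a')" unfolding a(2) a'(2) by (rule normal.rcos_sum[OF Bn ac])
    have aa: "a \<otimes> a' \<in> A" by (rule subgroup.m_closed[OF As a(1) a'(1)])
    have m1: "\<phi> X \<in> L" "\<phi> X \<in> X" using phi_mem[OF a(1)] a(2) by simp_all
    have m2: "\<phi> Y \<in> L" "\<phi> Y \<in> Y" using phi_mem[OF a'(1)] a'(2) by simp_all
    have "\<phi> X \<otimes> \<phi> Y \<in> X <#> Y" using m1(2) m2(2) unfolding set_mult_def by blast
    then have "\<phi> X \<otimes> \<phi> Y \<in> B #> (a \<otimes> a')" using XY by simp
    moreover have "\<phi> X \<otimes> \<phi> Y \<in> L" by (rule subgroup.m_closed[OF Ls m1(1) m2(1)])
    ultimately have "\<phi> (B #> (a \<otimes> a')) = \<phi> X \<otimes> \<phi> Y" using phi_char[OF aa] by blast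
    then show "\<phi> (X \<otimes>\<^bsub>(G\<lparr>carrier := A\<rparr>) Mod B\<^esub> Y) = \<phi> X \<otimes>\<^bsub>G\<lparr>carrier := L\<rparr>\<^esub> \<phi> Y"
      using XY by (simp add: mulQ)
  qed
  have inj: "inj_on \<phi> (carrier ((G\<lparr>carrier := A\<rparr>) Mod B))"
  proof (rule inj_onI)
    fix X Y assume X: "X \<in> carrier ((G\<lparr>carrier := A\<rparr>) Mod B)" and Y: "Y \<in> carrier ((G\<lparr>carrier := A\<rparr>) Mod B)"
      and e: "\<phi> X = \<phi> Y"
    obtain a where a: "a \<in> A" "X = B #> a" using X carQ by blast
    obtain a' where a': "a' \<in> A" "Y = B #> a'" using Y carQ by blast
    have ac: "a \<in> carrier G" "a' \<in> carrier G" using a(1) a'(1) Ac by blast+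
    have "\<phi> X \<in> B #> a" using phi_mem[OF a(1)] a(2) by simp
    then have r1: "B #> a = B #> \<phi> X" by (rule repr_independence[OF _ ac(1) Bs])
    have "\<phi> Y \<in> B #> a'" using phi_mem[OF a'(1)] a'(2) by simp
    then have r2: "B #> a' = B #> \<phi> Y" by (rule repr_independence[OF _ ac(2) Bs])
    have "X = B #> a" by (rule a(2))
    also have "\<dots> = B #> \<phi> X" by (rule r1)
    also have "\<dots> = B #> \<phi> Y" by (simp only: e)
    also have "\<dots> = B #> a'" by (rule r2[symmetric])
    also have "\<dots> = Y" by (rule a'(2)[symmetric])
    finally show "X = Y" .
  qed
  have img: "\<phi> ` carrier ((G\<lparr>carrier := A\<rparr>) Mod B) = carrier (G\<lparr>carrier := L\<rparr>)"
  proof (intro equalityI subsetI)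
    fix y assume "y \<in> \<phi> ` carrier ((G\<lparr>carrier := A\<rparr>) Mod B)"
    then obtain X where X: "X \<in> carrier ((G\<lparr>carrier := A\<rparr>) Mod B)" "y = \<phi> X" by (rule imageE)
    obtain a where a: "a \<in> A" "X = B #> a" using X(1) carQ by blast
    show "y \<in> carrier (G\<lparr>carrier := L\<rparr>)" using phi_mem[OF a(1)] X(2) a(2) by simp
  next
    fix l assume "l \<in> carrier (G\<lparr>carrier := L\<rparr>)"
    then have l: "l \<in> L" by simp
    have lA: "l \<in> A" using l L(3) by blast
    have lc: "l \<in> carrier G" using l Lc by blast
    have "l = \<one> \<otimes> l" using lc by simp
    then have "l \<in> B #> l" using subgroup.one_closed[OF Bs] unfolding r_coset_def by blast
    then have pl: "\<phi> (B #> l) = l" by (rule phi_char[OF lA l])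
    have "B #> l \<in> carrier ((G\<lparr>carrier := A\<rparr>) Mod B)" unfolding carQ using lA by (rule imageI)
    then show "l \<in> \<phi> ` carrier ((G\<lparr>carrier := A\<rparr>) Mod B)"
      by (rule image_eqI[where f=\<phi> and x="B #> l", OF pl[symmetric]])
  qed
  have iso: "\<phi> \<in> iso ((G\<lparr>carrier := A\<rparr>) Mod B) (G\<lparr>carrier := L\<rparr>)"
    unfolding iso_def bij_betw_def using hom inj img by blast
  have equiv: "\<forall>g\<in>carrier G. \<forall>a\<in>A. \<phi> (B #> (g \<otimes> a \<otimes> inv g)) = g \<otimes> \<phi> (B #> a) \<otimes> inv g"
  proof (intro ballI)
    fix g a assume g: "g \<in> carrier G" and a: "a \<in> A"
    have ac: "a \<in> carrier G" using a Ac by blast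
    define l where "l = \<phi> (B #> a)"
    have l: "l \<in> L" "l \<in> B #> a" using phi_mem[OF a] unfolding l_def by simp_all
    obtain b where b: "b \<in> B" "l = b \<otimes> a" using l(2) unfolding r_coset_def by blast
    have bc: "b \<in> carrier G" using b(1) Bc by blast
    have gaA: "g \<otimes> a \<otimes> inv g \<in> A" using An g a normal_inv_iff by blast
    have gL: "g \<otimes> l \<otimes> inv g \<in> L" using L(1) g l(1) normal_inv_iff by blast
    have gb: "g \<otimes> b \<otimes> inv g \<in> B" using Bn g b(1) normal_inv_iff by blast
    have eq: "g \<otimes> l \<otimes> inv g = (g \<otimes> b \<otimes> inv g) \<otimes> (g \<otimes> a \<otimes> inv g)"
      unfolding b(2) using g bc ac by (simp add: m_assoc gcancel2)
    have "(g \<otimes> b \<otimes> inv g) \<otimes> (g \<otimes> a \<otimes> inv g) \<in> B #> (g \<otimes> a \<otimes> inv g)"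
      unfolding r_coset_def using gb by blast
    then have gR: "g \<otimes> l \<otimes> inv g \<in> B #> (g \<otimes> a \<otimes> inv g)" by (simp only: eq)
    have "\<phi> (B #> (g \<otimes> a \<otimes> inv g)) = g \<otimes> l \<otimes> inv g" by (rule phi_char[OF gaA gL gR])
    then show "\<phi> (B #> (g \<otimes> a \<otimes> inv g)) = g \<otimes> \<phi> (B #> a) \<otimes> inv g"
      unfolding l_def .
  qed
  have one_L: "\<one> \<in> L" by (rule subgroup.one_closed[OF Ls])
  have Lne: "L \<noteq> {\<one>}"
  proof
    assume "L = {\<one>}"
    then have "B = A" using L(4) set_mult_one_right[OF Bc] by simp
    then show False using BneA by simp
  qed
  have minL: "minimal_closed_normal G T L"
    unfolding minimal_closed_normal_def
  proof (intro conjI allI impI)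
    show "L \<lhd> G" "closedin T L" "L \<noteq> {\<one>}" by (rule L(1), rule L(2), rule Lne)
  next
    fix M assume M: "M \<lhd> G \<and> closedin T M \<and> M \<subseteq> L \<and> M \<noteq> {\<one>}"
    then have Mn: "M \<lhd> G" and MsL: "M \<subseteq> L" and Mne: "M \<noteq> {\<one>}" by simp_all
    have Ms: "subgroup M G" using Mn by (rule normal_imp_subgroup)
    have Mc: "M \<subseteq> carrier G" using subgroup.subset[OF Ms] .
    have MA: "M \<subseteq> A" using MsL L(3) by blast
    have one_M: "\<one> \<in> M" by (rule subgroup.one_closed[OF Ms])
    show "M = L"
    proof (cases "B <#> M = A")
      case True
      show ?thesis
      proof (intro equalityI subsetI)
        fix m assume "m \<in> M" then show "m \<in> L" using MsL by blast
      next
        fix l assume l: "l \<in> L"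
        then have "l \<in> B <#> M" using True L(3) by blast
        then obtain b m where bm: "b \<in> B" "m \<in> M" "l = b \<otimes> m" unfolding set_mult_def by blast
        have bc: "b \<in> carrier G" using bm(1) Bc by blast
        have mc: "m \<in> carrier G" using bm(2) Mc by blast
        have "l \<otimes> inv m = b" using bm(3) bc mc by (simp add: m_assoc)
        moreover have "l \<otimes> inv m \<in> L"
          using subgroup.m_closed[OF Ls l subgroup.m_inv_closed[OF Ls]] bm(2) MsL by blast
        ultimately have "b \<in> B \<inter> L" using bm(1) by simp
        then have "b = \<one>" using L(5) by blast
        then show "l \<in> M" using bm(2,3) mc by simp
      qed
    next
      case False
      have Cn: "B <#> M \<lhd> G" by (rule prod_normal[OF An ab Bn BA Mn MA])
      have CA: "B <#> M \<subseteq> A"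
      proof
        fix y assume "y \<in> B <#> M"
        then obtain b m where bm: "b \<in> B" "m \<in> M" "y = b \<otimes> m" unfolding set_mult_def by blast
        have "b \<in> A" "m \<in> A" using bm(1,2) BA MA by blast+
        then show "y \<in> A" using bm(3) subgroup.m_closed[OF As] by simp
      qed
      have BC: "B \<subseteq> B <#> M"
      proof
        fix b assume b: "b \<in> B"
        have "b = b \<otimes> \<one>" using b Bc by auto
        then show "b \<in> B <#> M" using b one_M unfolding set_mult_def by blast
      qed
      define R where "R = (\<Union>m\<in>M. Q #> m)"
      have Ro: "openin T R" unfolding R_def
      proof (rule openin_Union)
        fix S assume "S \<in> (\<lambda>m. Q #> m) ` M"
        then obtain m where m: "m \<in> M" "S = Q #> m" by blast
        have "m \<in> carrier G" using m(1) Mc by blast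
        then show "openin T S" unfolding m(2) by (rule tg_rcoset_open[OF tg _ Q(1)])
      qed
      have "B <#> M = R \<inter> A"
      proof (intro equalityI subsetI)
        fix y assume y: "y \<in> B <#> M"
        then obtain b m where bm: "b \<in> B" "m \<in> M" "y = b \<otimes> m" unfolding set_mult_def by blast
        have "b \<in> Q" using bm(1) Q(2) by blast
        then have "y \<in> Q #> m" using bm(3) unfolding r_coset_def by blast
        then show "y \<in> R \<inter> A" using bm(2) y CA unfolding R_def by blast
      next
        fix y assume y: "y \<in> R \<inter> A"
        then obtain m q where mq: "m \<in> M" "q \<in> Q" "y = q \<otimes> m" unfolding R_def r_coset_def by blast
        have mc: "m \<in> carrier G" using mq(1) Mc by blast
        have qc: "q \<in> carrier G" using mq(2) Qc by blast
        have yA: "y \<in> A" using y by blast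
        have "inv m \<in> A" using subgroup.m_inv_closed[OF As] mq(1) MA by blast
        then have "y \<otimes> inv m \<in> A" using subgroup.m_closed[OF As yA] by blast
        moreover have "y \<otimes> inv m = q" using mq(3) mc qc by (simp add: m_assoc)
        ultimately have "q \<in> B" using mq(2) Q(2) by simp
        then show "y \<in> B <#> M" using mq(1,3) unfolding set_mult_def by blast
      qed
      then have "openin (subtopology T A) (B <#> M)" unfolding openin_subtopology using Ro by blast
      then have "B <#> M = B" using maxB[OF Cn CA False] BC by blast
      then have "M \<subseteq> B"
      proof -
        assume e: "B <#> M = B"
        show "M \<subseteq> B"
        proof
          fix m assume m: "m \<in> M"
          have "m = \<one> \<otimes> m" using m Mc by auto
          then have "m \<in> B <#> M" using m subgroup.one_closed[OF Bs] unfolding set_mult_def by blast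
          then show "m \<in> B" using e by simp
        qed
      qed
      then have "M \<subseteq> B \<inter> L" using MsL by blast
      then have "M = {\<one>}" using L(5) one_M by blast
      then show ?thesis using Mne by simp
    qed
  qed
  show "\<exists>N \<phi>. minimal_closed_normal G T N \<and> N \<subseteq> A \<and>
                 \<phi> \<in> iso ((G\<lparr>carrier := A\<rparr>) Mod B) (G\<lparr>carrier := N\<rparr>) \<and>
                 (\<forall>g\<in>carrier G. \<forall>a\<in>A.
                    \<phi> (B #> (g \<otimes> a \<otimes> inv g))
                    = g \<otimes> \<phi> (B #> a) \<otimes> inv g)"
    using minL L(3) iso equiv by blast
qed


theorem lemma2p7:
  fixes G :: "('a, 'b) monoid_scheme" and T :: "'a topology" and A :: "'a set"
  assumes "profinite_C_group G T"
    and "A \<lhd> G" and "closedin T A"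
    and "\<forall>x\<in>A. \<forall>y\<in>A. x \<otimes>\<^bsub>G\<^esub> y = y \<otimes>\<^bsub>G\<^esub> x"
  shows "(\<forall>B. closed_subgroup G T B \<and> B \<subseteq> A \<longrightarrow>
            (\<exists>L. L \<lhd> G \<and> closedin T L \<and> L \<subseteq> A \<and>
                 B <#>\<^bsub>G\<^esub> L = A \<and> B \<inter> L = {\<one>\<^bsub>G\<^esub>}))
     \<and> (minimal_closed_normal G T A \<longrightarrow> prime (card A))
     \<and> (\<forall>B. A \<noteq> {\<one>\<^bsub>G\<^esub>} \<and>
            (B \<lhd> G \<and> B \<subseteq> A \<and> B \<noteq> A \<and> openin (subtopology T A) B) \<and>
            (\<forall>C. C \<lhd> G \<and> C \<subseteq> A \<and> C \<noteq> A \<and> openin (subtopology T A) C \<and> B \<subseteq> C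
                 \<longrightarrow> C = B)
          \<longrightarrow> (\<exists>N \<phi>. minimal_closed_normal G T N \<and> N \<subseteq> A \<and>
                 \<phi> \<in> iso ((G\<lparr>carrier := A\<rparr>) Mod B) (G\<lparr>carrier := N\<rparr>) \<and>
                 (\<forall>g\<in>carrier G. \<forall>a\<in>A.
                    \<phi> (B #>\<^bsub>G\<^esub> (g \<otimes>\<^bsub>G\<^esub> a \<otimes>\<^bsub>G\<^esub> inv\<^bsub>G\<^esub> g))
                    = g \<otimes>\<^bsub>G\<^esub> \<phi> (B #>\<^bsub>G\<^esub> a) \<otimes>\<^bsub>G\<^esub> inv\<^bsub>G\<^esub> g)))
     \<and> (A \<noteq> {\<one>\<^bsub>G\<^esub>} \<longrightarrow> (\<exists>N. minimal_closed_normal G T N \<and> N \<subseteq> A))"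
proof -
  have grp: "group G"
    using assms(1) unfolding profinite_C_group_def profinite_group_def topological_group_def by simp
  interpret group G by (rule grp)
  show ?thesis
    using part1[OF assms] part2[OF assms] part3[OF assms] part4[OF assms] by (intro conjI)
qed

end
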